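(* Let $(\Omega,\sqsubseteq)$ be a poset and $\mathcal{R}:\Omega\to\wp(\Omega)$ satisfy: ($\mathcal{R}$-monotonicity) if $\omega'\sqsubseteq\omega$ then $\mathcal{R}(\omega')\subseteq\mathcal{R}(\omega)$; ($\mathcal{R}$-regularity) $\mathcal{R}(\omega)\in\mathcal{RO}(\Omega,\sqsubseteq)$ for all $\omega$; ($\mathcal{R}$-refinability) if $\nu\in\mathcal{R}(\omega)$ then there is $\omega'\sqsubseteq\omega$ such that for all $\omega''\sqsubseteq\omega'$ there is $\nu'\sqsubseteq\nu$ with $\nu'\in\mathcal{R}(\omega'')$. Then for any $E\in\mathcal{RO}(\Omega,\sqsubseteq)$, we have $\{\omega\in\Omega\mid\mathcal{R}(\omega)\subseteq E\}\in\mathcal{RO}(\Omega,\sqsubseteq)$.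
   Context: $\downarrow E=\{\omega\mid\omega\sqsubseteq\nu\text{ for some }\nu\in E\}$; $\rho(E)=\{\omega\mid\forall\omega'\sqsubseteq\omega\ \exists\omega''\sqsubseteq\omega'\colon\omega''\in\downarrow E\}$; $\mathcal{RO}(\Omega,\sqsubseteq)=\{E\subseteq\Omega\mid\rho(E)=E\}$ is the set of regular open sets of the downset topology of $(\Omega,\sqsubseteq)$. *)

theory Defs
  imports Main
begin

definition downclosure :: "'a::order set \<Rightarrow> 'a set" where
  "downclosure E = {w. \<exists>v\<in>E. w \<le> v}"

definition rho :: "'a::order set \<Rightarrow> 'a set" where
  "rho E = {w. \<forall>w'. w' \<le> w \<longrightarrow> (\<exists>w''. w'' \<le> w' \<and> w'' \<in> downclosure E)}"

definition RO :: "'a::order set set" where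
  "RO = {E. rho E = E}"

end

theory Submission
  imports Defs
begin

lemma RO_down: assumes "S \<in> RO" "x \<in> S" "y \<le> x" shows "y \<in> S"
proof -
  have "rho S = S" using assms(1) by (simp add: RO_def)
  then have "x \<in> rho S" using assms(2) by simp
  then have "y \<in> rho S" unfolding rho_def using assms(3) order_trans by blast
  then show ?thesis using \<open>rho S = S\<close> by simp
qed

lemma RO_intro: assumes "S \<in> RO" "\<And>x'. x' \<le> x \<Longrightarrow> \<exists>x''. x'' \<le> x' \<and> x'' \<in> S" shows "x \<in> S"
proof -
  have "rho S = S" using assms(1) by (simp add: RO_def)
  have "x \<in> rho S" unfolding rho_def downclosure_def using assms(2) by blast
  then show ?thesis using \<open>rho S = S\<close> by simp
qed

theorem lemma3p10:
  fixes R :: "'a::order \<Rightarrow> 'a set" and E :: "'a set"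
  assumes R_mono: "\<And>w w'. w' \<le> w \<Longrightarrow> R w' \<subseteq> R w"
    and R_reg: "\<And>w. R w \<in> RO"
    and R_ref: "\<And>w v. v \<in> R w \<Longrightarrow>
        \<exists>w'. w' \<le> w \<and> (\<forall>w''. w'' \<le> w' \<longrightarrow> (\<exists>v'. v' \<le> v \<and> v' \<in> R w''))"
    and E_RO: "E \<in> RO"
  shows "{w. R w \<subseteq> E} \<in> RO"
proof -
  let ?F = "{w. R w \<subseteq> E}"
  have "rho ?F = ?F"
  proof
    show "?F \<subseteq> rho ?F"
      unfolding rho_def downclosure_def using R_mono by blast
  next
    show "rho ?F \<subseteq> ?F"
    proof
      fix w assume w: "w \<in> rho ?F"
      have wF: "\<exists>w2. w2 \<le> w1 \<and> R w2 \<subseteq> E" if "w1 \<le> w" for w1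
      proof -
        have "\<exists>w2. w2 \<le> w1 \<and> (\<exists>u\<in>?F. w2 \<le> u)"
          using w that unfolding rho_def downclosure_def by blast
        then obtain w2 u where "w2 \<le> w1" "w2 \<le> u" "R u \<subseteq> E" by blast
        then show ?thesis using R_mono by blast
      qed
      have "R w \<subseteq> E"
      proof
        fix v assume v: "v \<in> R w"
        show "v \<in> E"
        proof (rule RO_intro[OF E_RO])
          fix v' assume "v' \<le> v"
          then have "v' \<in> R w" using RO_down[OF R_reg v] by blast
          then obtain w1 where w1: "w1 \<le> w" "\<forall>w''. w'' \<le> w1 \<longrightarrow> (\<exists>v''. v'' \<le> v' \<and> v'' \<in> R w'')"
            using R_ref by blast
          obtain w2 where "w2 \<le> w1" "R w2 \<subseteq> E" using wF[OF w1(1)] by blast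
          then show "\<exists>x''. x'' \<le> v' \<and> x'' \<in> E" using w1(2) by blast
        qed
      qed
      then show "w \<in> ?F" by simp
    qed
  qed
  then show ?thesis by (simp add: RO_def)
qed

end
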